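(* Let $\mathbb{K}$ be a field, let $P_1, P_2 \in \mathbb{K}[X]$ be irreducible, let $f : \mathbb{K}[X]/(P_1) \to \mathbb{K}[X]/(P_2)$ be a ring isomorphism stabilizing $\mathbb{K}$, and let $n > 1$ be an integer. Then $S_f$ is coprime to $P_2$ if and only if $f_{X,n} : \mathbb{K}[X]/(P_1^n) \to \mathbb{K}[X]/(P_2^n)$ is an isomorphism.
   Context: A ring homomorphism $f : A \to B$ between $\mathbb{K}$-algebras stabilizes $\mathbb{K}$ if there is a field automorphism $\sigma_f$ of $\mathbb{K}$ with $f(a) = \sigma_f(a)$ for all $a \in \mathbb{K}$. For a field automorphism $\sigma$ of $\mathbb{K}$, $\sigma^X$ is the ring automorphism of $\mathbb{K}[X]$ applying $\sigma$ to coefficients; $A\circ Q$ denotes $A(Q(X))$. For a ring isomorphism $f : \mathbb{K}[X]/(P_1) \to \mathbb{K}[X]/(P_2)$ stabilizing $\mathbb{K}$: $Q_f$ is the unique polynomial of degree $< \deg P_2$ such that $f$ sends the class of $X$ to the class of $Q_f$ (then $f(\text{class of }P) = \text{class of } \sigma_f^X(P)\circ Q_f$); $S_f\in\mathbb{K}[X]$ is the polynomial with $\sigma_f^X(P_1)\circ Q_f = S_f P_2$ (it exists because $\sigma_f^X(P_1)\circ Q_f$ is divisible by $P_2$); and $f_{X,n} : \mathbb{K}[X]/(P_1^n) \to \mathbb{K}[X]/(P_2^n)$ is the well-defined ring homomorphism sending the class of $P$ to the class of $\sigma_f^X(P)\circ Q_f$. *)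

theory Defs
  imports "HOL-Computational_Algebra.Computational_Algebra"
begin

definition field_aut :: "('k::field \<Rightarrow> 'k) \<Rightarrow> bool" where
  "field_aut \<sigma> \<longleftrightarrow> bij \<sigma> \<and> (\<forall>a b. \<sigma> (a + b) = \<sigma> a + \<sigma> b)
     \<and> (\<forall>a b. \<sigma> (a * b) = \<sigma> a * \<sigma> b) \<and> \<sigma> 1 = 1"

text \<open>A map F on polynomials represents a (well-defined) ring homomorphism
  K[X]/(P1) \<rightarrow> K[X]/(P2): it respects congruence mod P1 and the ring operations mod P2.\<close>
definition quot_ring_hom :: "'k::field poly \<Rightarrow> 'k poly \<Rightarrow> ('k poly \<Rightarrow> 'k poly) \<Rightarrow> bool" where
  "quot_ring_hom P1 P2 F \<longleftrightarrow>
     (\<forall>a b. a mod P1 = b mod P1 \<longrightarrow> F a mod P2 = F b mod P2)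
   \<and> (\<forall>a b. F (a + b) mod P2 = (F a + F b) mod P2)
   \<and> (\<forall>a b. F (a * b) mod P2 = (F a * F b) mod P2)
   \<and> F 1 mod P2 = 1 mod P2"

definition quot_ring_iso :: "'k::field poly \<Rightarrow> 'k poly \<Rightarrow> ('k poly \<Rightarrow> 'k poly) \<Rightarrow> bool" where
  "quot_ring_iso P1 P2 F \<longleftrightarrow> quot_ring_hom P1 P2 F
   \<and> (\<forall>a b. F a mod P2 = F b mod P2 \<longrightarrow> a mod P1 = b mod P1)
   \<and> (\<forall>b. \<exists>a. F a mod P2 = b mod P2)"

definition stabilizes_K :: "'k::field poly \<Rightarrow> ('k poly \<Rightarrow> 'k poly) \<Rightarrow> ('k \<Rightarrow> 'k) \<Rightarrow> bool" where
  "stabilizes_K P2 F \<sigma> \<longleftrightarrow> field_aut \<sigma> \<and> (\<forall>c. F [:c:] mod P2 = [:\<sigma> c:] mod P2)"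

text \<open>Q_f: the unique representative of degree < deg P2 of the image of the class of X.\<close>
definition Q_f :: "'k::field poly \<Rightarrow> ('k poly \<Rightarrow> 'k poly) \<Rightarrow> 'k poly" where
  "Q_f P2 F = F [:0, 1:] mod P2"

text \<open>S_f with \<sigma>^X(P1) \<circ> Q_f = S_f * P2.\<close>
definition S_f :: "'k::field poly \<Rightarrow> 'k poly \<Rightarrow> ('k poly \<Rightarrow> 'k poly) \<Rightarrow> ('k \<Rightarrow> 'k) \<Rightarrow> 'k poly" where
  "S_f P1 P2 F \<sigma> = pcompose (map_poly \<sigma> P1) (Q_f P2 F) div P2"

definition f_Xn :: "'k::field poly \<Rightarrow> ('k poly \<Rightarrow> 'k poly) \<Rightarrow> ('k \<Rightarrow> 'k) \<Rightarrow> 'k poly \<Rightarrow> 'k poly" where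
  "f_Xn P2 F \<sigma> P = pcompose (map_poly \<sigma> P) (Q_f P2 F)"

end

theory Submission
  imports Defs
begin
lemma fa_0: "field_aut \<sigma> \<Longrightarrow> \<sigma> 0 = 0"
  unfolding field_aut_def by (metis add_cancel_right_left add_0)

lemma fa_minus: "field_aut \<sigma> \<Longrightarrow> \<sigma> (- x) = - \<sigma> x"
  using fa_0[of \<sigma>] unfolding field_aut_def
  by (metis add.right_inverse add_eq_0_iff)

lemma fa_sum: "field_aut \<sigma> \<Longrightarrow> \<sigma> (sum g A) = sum (\<lambda>i. \<sigma> (g i)) A"
proof (induction A rule: infinite_finite_induct)
  case (infinite A) then show ?case by (simp add: fa_0)
next
  case empty then show ?case by (simp add: fa_0)
next
  case (insert x F) then show ?case by (simp add: field_aut_def)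
qed

lemma mp_add: "field_aut \<sigma> \<Longrightarrow> map_poly \<sigma> (p + q) = map_poly \<sigma> p + map_poly \<sigma> q"
  by (intro poly_eqI) (simp add: coeff_map_poly fa_0 field_aut_def)

lemma mp_mult: "field_aut \<sigma> \<Longrightarrow> map_poly \<sigma> (p * q) = map_poly \<sigma> p * map_poly \<sigma> q"
  by (intro poly_eqI) (simp add: coeff_map_poly fa_0 coeff_mult fa_sum field_aut_def)

lemma mp_minus: "field_aut \<sigma> \<Longrightarrow> map_poly \<sigma> (- p) = - map_poly \<sigma> p"
  by (intro poly_eqI) (simp add: coeff_map_poly fa_0 fa_minus)

lemma mp_diff: "field_aut \<sigma> \<Longrightarrow> map_poly \<sigma> (p - q) = map_poly \<sigma> p - map_poly \<sigma> q"
  using mp_add[of \<sigma> p "-q"] mp_minus[of \<sigma> q] by simp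

lemma phi_add: "field_aut \<sigma> \<Longrightarrow> f_Xn P2 F \<sigma> (p + q) = f_Xn P2 F \<sigma> p + f_Xn P2 F \<sigma> q"
  by (simp add: f_Xn_def mp_add pcompose_add)
lemma phi_diff: "field_aut \<sigma> \<Longrightarrow> f_Xn P2 F \<sigma> (p - q) = f_Xn P2 F \<sigma> p - f_Xn P2 F \<sigma> q"
  by (simp add: f_Xn_def mp_diff pcompose_diff)
lemma phi_mult: "field_aut \<sigma> \<Longrightarrow> f_Xn P2 F \<sigma> (p * q) = f_Xn P2 F \<sigma> p * f_Xn P2 F \<sigma> q"
  by (simp add: f_Xn_def mp_mult pcompose_mult)
lemma phi_1: "field_aut \<sigma> \<Longrightarrow> f_Xn P2 F \<sigma> 1 = 1"
  by (simp add: f_Xn_def field_aut_def pcompose_1)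
lemma phi_0: "f_Xn P2 F \<sigma> 0 = 0"
  by (simp add: f_Xn_def)
lemma phi_power: "field_aut \<sigma> \<Longrightarrow> f_Xn P2 F \<sigma> (p ^ k) = f_Xn P2 F \<sigma> p ^ k"
  by (induction k) (simp_all add: phi_1 phi_mult)
lemma phi_pCons: "field_aut \<sigma> \<Longrightarrow> f_Xn P2 F \<sigma> (pCons c p) = [:\<sigma> c:] + Q_f P2 F * f_Xn P2 F \<sigma> p"
  by (simp add: f_Xn_def map_poly_pCons fa_0 pcompose_pCons)

lemma modcong3:
  fixes a b c m :: "'a::euclidean_ring_cancel"
  shows "(a + b * c) mod m = (a mod m + (b mod m) * (c mod m)) mod m"
proof -
  have e1: "(a mod m + (b mod m) * (c mod m)) mod m = (a + (b mod m) * (c mod m)) mod m"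
    by (rule mod_add_left_eq)
  have e2: "(a + (b mod m) * (c mod m)) mod m = (a + ((b mod m) * (c mod m)) mod m) mod m"
    by (rule mod_add_right_eq[symmetric])
  have e3: "((b mod m) * (c mod m)) mod m = (b * c) mod m" by (rule mod_mult_eq)
  have e4: "(a + (b * c) mod m) mod m = (a + b * c) mod m" by (rule mod_add_right_eq)
  show ?thesis using e1 e2 e3 e4 by simp
qed

lemma F_phi:
  assumes h: "quot_ring_hom P1 P2 F" and s: "stabilizes_K P2 F \<sigma>"
  shows "F p mod P2 = f_Xn P2 F \<sigma> p mod P2"
proof (induction p)
  case 0
  have "F [:0:] mod P2 = [:\<sigma> 0:] mod P2" using s unfolding stabilizes_K_def by blast
  then show ?case using s by (simp add: stabilizes_K_def fa_0 phi_0)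
next
  case (pCons c p)
  have fa: "field_aut \<sigma>" using s by (simp add: stabilizes_K_def)
  have c1: "F [:c:] mod P2 = [:\<sigma> c:] mod P2" using s by (simp add: stabilizes_K_def)
  have hadd: "F (x + y) mod P2 = (F x + F y) mod P2" for x y
    using h unfolding quot_ring_hom_def by blast
  have hmul: "F (x * y) mod P2 = (F x * F y) mod P2" for x y
    using h unfolding quot_ring_hom_def by blast
  have e: "pCons c p = [:c:] + [:0,1:] * p" by simp
  have "F (pCons c p) mod P2 = (F [:c:] + F ([:0,1:] * p)) mod P2"
    unfolding e by (rule hadd)
  also have "\<dots> = (F [:c:] + F ([:0,1:] * p) mod P2) mod P2"
    by (rule mod_add_right_eq[symmetric])
  also have "\<dots> = (F [:c:] + (F [:0,1:] * F p) mod P2) mod P2"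
    by (simp only: hmul)
  also have "\<dots> = (F [:c:] + F [:0,1:] * F p) mod P2"
    by (rule mod_add_right_eq)
  also have "\<dots> = (F [:c:] mod P2 + (F [:0,1:] mod P2) * (F p mod P2)) mod P2"
    by (rule modcong3)
  also have "\<dots> = ([:\<sigma> c:] mod P2 + (Q_f P2 F mod P2) * (f_Xn P2 F \<sigma> p mod P2)) mod P2"
    by (simp only: c1 pCons.IH Q_f_def mod_mod_trivial)
  also have "\<dots> = ([:\<sigma> c:] + Q_f P2 F * f_Xn P2 F \<sigma> p) mod P2"
    by (rule modcong3[symmetric])
  also have "\<dots> = f_Xn P2 F \<sigma> (pCons c p) mod P2" by (simp only: phi_pCons[OF fa])
  finally show ?case .
qed

lemma field_poly_inv_mod:
  fixes P s :: "'k::field poly"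
  assumes pr: "prime_elem P" and nd: "\<not> P dvd s"
  shows "\<exists>u. P dvd u * s - 1"
proof -
  define I where "I = {u * s + v * P | u v. True}"
  have sI: "s \<in> I" unfolding I_def by (rule CollectI, rule exI[of _ 1], rule exI[of _ 0]) simp
  have s0: "s \<noteq> 0" using nd by auto
  define N where "N = (LEAST n. \<exists>d\<in>I. d \<noteq> 0 \<and> degree d = n)"
  have "\<exists>d\<in>I. d \<noteq> 0 \<and> degree d = N"
    unfolding N_def by (rule LeastI[of _ "degree s"]) (use sI s0 in blast)
  then obtain d where dI: "d \<in> I" and d0: "d \<noteq> 0" and dN: "degree d = N" by blast
  have minN: "N \<le> degree e" if "e \<in> I" "e \<noteq> 0" for e
    unfolding N_def by (rule Least_le) (use that in blast)
  from dI obtain u0 v0 where d: "d = u0 * s + v0 * P" unfolding I_def by blast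
  have ddvd: "d dvd x" if "x \<in> I" for x
  proof (rule ccontr)
    assume "\<not> d dvd x"
    then have m0: "x mod d \<noteq> 0" by (simp add: dvd_eq_mod_eq_0)
    from that obtain u v where x: "x = u * s + v * P" unfolding I_def by blast
    have "x mod d = x - (x div d) * d" by (simp add: minus_div_mult_eq_mod)
    also have "\<dots> = (u - x div d * u0) * s + (v - x div d * v0) * P"
      by (simp add: x d algebra_simps)
    finally have "x mod d \<in> I" unfolding I_def by blast
    then have "N \<le> degree (x mod d)" using m0 minN by blast
    moreover have "degree (x mod d) < degree d" using degree_mod_less'[OF d0 m0] .
    ultimately show False using dN by simp
  qed
  have "P \<in> I" unfolding I_def by (rule CollectI, rule exI[of _ 0], rule exI[of _ 1]) simp
  then have dP: "d dvd P" by (rule ddvd)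
  have dS: "d dvd s" using sI by (rule ddvd)
  have irr: "irreducible P" using pr by (rule prime_elem_imp_irreducible)
  from dP obtain e where e: "P = d * e" by (auto elim: dvdE)
  have "is_unit d"
  proof (rule ccontr)
    assume "\<not> is_unit d"
    then have "is_unit e" using irreducibleD[OF irr e] by blast
    then have "P dvd d" using e by (simp add: mult_unit_dvd_iff')
    then show False using dS nd dvd_trans by blast
  qed
  then obtain w where w: "1 = d * w" by (auto elim: dvdE)
  have "w * u0 * s - 1 = - (w * v0) * P" using w d by (simp add: algebra_simps)
  then show ?thesis by (metis dvd_triv_right)
qed

lemma coprime_irred_iff:
  fixes P S :: "'k::field poly"
  assumes irr: "irreducible P"
  shows "coprime S P \<longleftrightarrow> \<not> P dvd S"
proof
  assume "coprime S P" then show "\<not> P dvd S"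
    using irr by (metis coprime_def dvd_refl irreducible_not_unit)
next
  assume nd: "\<not> P dvd S"
  show "coprime S P"
  proof (rule coprimeI)
    fix c assume cS: "c dvd S" and cP: "c dvd P"
    from cP obtain e where e: "P = c * e" by (auto elim: dvdE)
    show "is_unit c"
    proof (rule ccontr)
      assume "\<not> is_unit c"
      then have "is_unit e" using irreducibleD[OF irr e] by blast
      then have "P dvd c" using e by (simp add: mult_unit_dvd_iff')
      then show False using cS nd dvd_trans by blast
    qed
  qed
qed

theorem mainTheorem10:
  fixes P1 P2 :: "'k::field poly" and F :: "'k poly \<Rightarrow> 'k poly"
    and \<sigma> :: "'k \<Rightarrow> 'k" and n :: nat
  assumes "irreducible P1" and "irreducible P2"
    and "quot_ring_iso P1 P2 F"
    and "stabilizes_K P2 F \<sigma>"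
    and "n > 1"
  shows "coprime (S_f P1 P2 F \<sigma>) P2 \<longleftrightarrow> quot_ring_iso (P1 ^ n) (P2 ^ n) (f_Xn P2 F \<sigma>)"
proof -
  define \<phi> where "\<phi> = f_Xn P2 F \<sigma>"
  define S where "S = S_f P1 P2 F \<sigma>"
  have fa: "field_aut \<sigma>" using assms(4) by (simp add: stabilizes_K_def)
  have h: "quot_ring_hom P1 P2 F" using assms(3) unfolding quot_ring_iso_def by blast
  have inj: "\<And>a b. F a mod P2 = F b mod P2 \<Longrightarrow> a mod P1 = b mod P1"
    using assms(3) unfolding quot_ring_iso_def by blast
  have sur: "\<And>b. \<exists>a. F a mod P2 = b mod P2"
    using assms(3) unfolding quot_ring_iso_def by blast
  have Fphi: "\<And>p. F p mod P2 = \<phi> p mod P2"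
    using F_phi[OF h assms(4)] by (simp add: \<phi>_def)
  have P1ne: "P1 \<noteq> 0" and P1nu: "\<not> is_unit P1" using assms(1) irreducible_not_unit by auto
  have P2ne: "P2 \<noteq> 0" using assms(2) by auto
  have pr2: "prime_elem P2" using assms(2) by (rule field_poly_irreducible_imp_prime)
  have padd: "\<And>p q. \<phi> (p + q) = \<phi> p + \<phi> q" by (simp add: \<phi>_def phi_add fa)
  have pdiff: "\<And>p q. \<phi> (p - q) = \<phi> p - \<phi> q" by (simp add: \<phi>_def phi_diff fa)
  have pmult: "\<And>p q. \<phi> (p * q) = \<phi> p * \<phi> q" by (simp add: \<phi>_def phi_mult fa)
  have ppow: "\<And>p k. \<phi> (p ^ k) = \<phi> p ^ k" by (simp add: \<phi>_def phi_power fa)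
  have p1: "\<phi> 1 = 1" by (simp add: \<phi>_def phi_1 fa)
  have p0: "\<phi> 0 = 0" by (simp add: \<phi>_def phi_0)
  have K1: "P1 dvd a" if "P2 dvd \<phi> a" for a
  proof -
    have "F a mod P2 = F 0 mod P2" using that Fphi[of a] Fphi[of 0] p0 by (simp add: dvd_eq_mod_eq_0)
    then have "a mod P1 = 0 mod P1" by (rule inj)
    then show ?thesis by (simp add: dvd_eq_mod_eq_0)
  qed
  have K2: "\<phi> P1 = S * P2"
  proof -
    have "P1 mod P1 = 0 mod P1" by simp
    then have "F P1 mod P2 = F 0 mod P2" using h unfolding quot_ring_hom_def by blast
    then have "P2 dvd \<phi> P1" using Fphi[of P1] Fphi[of 0] p0 by (simp add: dvd_eq_mod_eq_0)
    moreover have "S = \<phi> P1 div P2" by (simp add: S_def S_f_def \<phi>_def f_Xn_def)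
    ultimately show ?thesis by simp
  qed
  have K3: "\<exists>a. \<phi> a mod P2 = c mod P2" for c
    using sur[of c] Fphi by metis
  have hom: "quot_ring_hom (P1 ^ n) (P2 ^ n) \<phi>"
    unfolding quot_ring_hom_def
  proof (intro conjI allI impI)
    fix a b assume "a mod P1 ^ n = b mod P1 ^ n"
    then obtain c where c: "a - b = P1 ^ n * c" by (auto simp: mod_eq_dvd_iff)
    have "\<phi> a - \<phi> b = \<phi> (P1 ^ n * c)" by (subst pdiff[symmetric]) (simp only: c)
    also have "\<dots> = (S * P2) ^ n * \<phi> c" by (simp only: pmult ppow K2)
    also have "\<dots> = P2 ^ n * (S ^ n * \<phi> c)" by (simp add: power_mult_distrib algebra_simps)
    finally have "\<phi> a - \<phi> b = P2 ^ n * (S ^ n * \<phi> c)" .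
    then show "\<phi> a mod P2 ^ n = \<phi> b mod P2 ^ n" by (simp add: mod_eq_dvd_iff)
  qed (simp_all add: padd pmult p1)
  have copiff: "coprime S P2 \<longleftrightarrow> \<not> P2 dvd S" by (rule coprime_irred_iff[OF assms(2)])
  show ?thesis unfolding S_def[symmetric] \<phi>_def[symmetric] copiff
  proof
    assume cop: "\<not> P2 dvd S"
    have injk: "P1 ^ k dvd a" if "P2 ^ k dvd \<phi> a" for k a
      using that
    proof (induction k arbitrary: a)
      case 0 then show ?case by simp
    next
      case (Suc k)
      have "P2 ^ k dvd \<phi> a" using Suc.prems dvd_trans[of "P2 ^ k" "P2 ^ Suc k"] by (simp add: le_imp_power_dvd)
      then obtain b where b: "a = P1 ^ k * b" using Suc.IH by (auto elim: dvdE)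
      have "\<phi> a = P2 ^ k * (S ^ k * \<phi> b)"
        using b pmult ppow K2 by (simp add: power_mult_distrib algebra_simps)
      then have "P2 ^ k * P2 dvd P2 ^ k * (S ^ k * \<phi> b)" using Suc.prems by simp
      then have "P2 dvd S ^ k * \<phi> b" using P2ne by (simp add: mult_dvd_mono)
      moreover have "\<not> P2 dvd S ^ k" using cop prime_elem_dvd_power[OF pr2] by blast
      ultimately have "P2 dvd \<phi> b" using prime_elem_dvd_mult_iff[OF pr2] by blast
      then have "P1 dvd b" by (rule K1)
      then show ?case using b by simp
    qed
    have surm: "\<exists>a. \<phi> a mod P2 ^ m = b mod P2 ^ m" for m b
    proof (induction m arbitrary: b)
      case 0 then show ?case by simp
    next
      case (Suc m)
      obtain a where a: "\<phi> a mod P2 ^ m = b mod P2 ^ m" using Suc.IH by blast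
      then obtain c where c: "b - \<phi> a = P2 ^ m * c" by (metis mod_eq_dvd_iff dvdE)
      have "\<not> P2 dvd S ^ m" using cop prime_elem_dvd_power[OF pr2] by blast
      then obtain u where "P2 dvd u * S ^ m - 1" using field_poly_inv_mod[OF pr2] by blast
      then obtain v0 where "u * S ^ m - 1 = P2 * v0" by (auto elim: dvdE)
      then have uv: "u * S ^ m + (- v0) * P2 = 1" by (simp add: algebra_simps)
      define v where "v = - v0"
      note uv = uv[folded v_def]
      obtain a' where a': "\<phi> a' mod P2 = (u * c) mod P2" using K3 by blast
      then obtain d where d: "\<phi> a' - u * c = P2 * d" by (metis mod_eq_dvd_iff dvdE)
      have "\<phi> (a + P1 ^ m * a') = \<phi> a + S ^ m * P2 ^ m * \<phi> a'"
        using padd pmult ppow K2 by (simp add: power_mult_distrib)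
      also have "\<phi> a' = u * c + P2 * d" using d by (simp add: algebra_simps)
      also have "\<phi> a + S ^ m * P2 ^ m * (u * c + P2 * d)
          = \<phi> a + P2 ^ m * c * (u * S ^ m) + P2 ^ Suc m * (S ^ m * d)"
        by (simp add: algebra_simps)
      also have "u * S ^ m = 1 - v * P2" using uv by (simp add: algebra_simps)
      also have "\<phi> a + P2 ^ m * c * (1 - v * P2) + P2 ^ Suc m * (S ^ m * d)
          = b + P2 ^ Suc m * (S ^ m * d - c * v)"
        using c by (simp add: algebra_simps)
      finally have "\<phi> (a + P1 ^ m * a') mod P2 ^ Suc m = b mod P2 ^ Suc m" by simp
      then show ?case by blast
    qed
    show "quot_ring_iso (P1 ^ n) (P2 ^ n) \<phi>"
      unfolding quot_ring_iso_def
    proof (intro conjI allI impI hom)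
      fix a b assume "\<phi> a mod P2 ^ n = \<phi> b mod P2 ^ n"
      then have "P2 ^ n dvd \<phi> (a - b)" by (simp add: mod_eq_dvd_iff pdiff)
      then show "a mod P1 ^ n = b mod P1 ^ n" using injk by (simp add: mod_eq_dvd_iff)
    next
      fix b show "\<exists>a. \<phi> a mod P2 ^ n = b mod P2 ^ n" by (rule surm)
    qed
  next
    assume iso: "quot_ring_iso (P1 ^ n) (P2 ^ n) \<phi>"
    show "\<not> P2 dvd S"
    proof
      assume "P2 dvd S"
      then obtain t where t: "S = P2 * t" by (auto elim: dvdE)
      define k where "k = n - 2"
      have k: "n = Suc (Suc k)" using assms(5) unfolding k_def by simp
      have "\<phi> (P1 ^ Suc k) = (S * P2) ^ Suc k" by (simp only: ppow K2)
      also have "\<dots> = (P2 * t * P2) ^ Suc k" by (simp only: t)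
      also have "\<dots> = t ^ Suc k * (P2 ^ Suc k * P2 ^ Suc k)"
        by (simp only: power_mult_distrib mult_ac)
      also have "P2 ^ Suc k * P2 ^ Suc k = P2 ^ Suc (Suc k) * P2 ^ k"
        by (simp only: power_add[symmetric]) simp
      finally have e: "\<phi> (P1 ^ Suc k) = P2 ^ n * (t ^ Suc k * P2 ^ k)" by (simp add: k mult_ac)
      have "\<phi> (P1 ^ Suc k) mod P2 ^ n = \<phi> 0 mod P2 ^ n" unfolding e p0 by simp
      then have "P1 ^ Suc k mod P1 ^ n = 0 mod P1 ^ n"
        using iso unfolding quot_ring_iso_def by blast
      then have dv: "P1 ^ n dvd P1 ^ Suc k" by (simp add: dvd_eq_mod_eq_0)
      have "degree P1 > 0" using P1ne P1nu
        using is_unit_iff_degree by blast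
      moreover have "degree (P1 ^ n) \<le> degree (P1 ^ Suc k)"
        using dvd_imp_degree_le[OF dv] P1ne by (simp del: power_Suc)
      moreover have "degree (P1 ^ n) = n * degree P1" by (rule degree_power_eq[OF P1ne])
      moreover have "degree (P1 ^ Suc k) = Suc k * degree P1" by (rule degree_power_eq[OF P1ne])
      ultimately show False using k by simp
    qed
  qed
qed

end
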